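(* For all integers $n\geq 0$, $k\geq 0$ and $\alpha>2k+1$, $$\overline{B}_{2^\alpha,3}\big(4^k(4n+3)\big)\equiv 0\pmod 6.$$ Moreover, for all integers $n\ge 0$ and $\alpha>2$, $$\overline{B}_{2^\alpha,3}(8n+7)\equiv 0\pmod{12}.$$
   Context: An overpartition of a nonnegative integer $n$ is a partition of $n$ (a non-increasing sequence of positive integers summing to $n$) in which the first occurrence of each distinct part may be overlined. For relatively prime integers $\ell_1,\ell_2>1$, an $(\ell_1,\ell_2)$-biregular overpartition of $n$ is an overpartition of $n$ none of whose parts is divisible by $\ell_1$ or by $\ell_2$, and $\overline{B}_{\ell_1,\ell_2}(n)$ denotes the number of such overpartitions ($\overline{B}_{\ell_1,\ell_2}(0)=1$). Equivalently, writing $f_k=(q^k;q^k)_\infty=\prod_{m\ge1}(1-q^{km})$ for $|q|<1$, $$\sum_{n\ge0}\overline{B}_{\ell_1,\ell_2}(n)q^n=\frac{f_2\, f_{\ell_1}^2\, f_{\ell_2}^2\, f_{2\ell_1\ell_2}}{f_1^2\, f_{2\ell_1}\, f_{2\ell_2}\, f_{\ell_1\ell_2}^2}.$$ *)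

theory Defs
  imports Main "HOL-Library.Multiset" "HOL-Number_Theory.Cong"
begin

text \<open>An overpartition of n: a partition of n (a multiset of positive integers
summing to n) together with the set of distinct parts whose first occurrence
is overlined (any subset of the set of distinct parts).\<close>
definition overpartitions :: "nat \<Rightarrow> (nat multiset \<times> nat set) set" where
  "overpartitions n = {(M, S). (\<forall>x\<in>#M. 0 < x) \<and> sum_mset M = n \<and> S \<subseteq> set_mset M}"

definition biregular_overpartitions :: "nat \<Rightarrow> nat \<Rightarrow> nat \<Rightarrow> (nat multiset \<times> nat set) set" where
  "biregular_overpartitions l1 l2 n =
     {(M, S) \<in> overpartitions n. \<forall>x\<in>#M. \<not> l1 dvd x \<and> \<not> l2 dvd x}"

definition Bbar :: "nat \<Rightarrow> nat \<Rightarrow> nat \<Rightarrow> nat" where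
  "Bbar l1 l2 n = card (biregular_overpartitions l1 l2 n)"

end

theory Submission
  imports Defs "HOL-Library.Numeral_Type" "HOL-Computational_Algebra.Formal_Power_Series" "HOL-Library.Multiset"
begin



lemma sq_mod4: "(x::nat)^2 mod 4 = (if even x then 0 else 1)"
proof (cases "even x")
  case True
  then obtain a where "x = 2 * a" by blast
  then show ?thesis by (simp add: power2_eq_square)
next
  case False
  then obtain a where a: "x = 2 * a + 1" using oddE by blast
  have "x^2 = 4 * (a*a + a) + 1" unfolding a by (simp add: power2_eq_square algebra_simps)
  then show ?thesis using False by simp
qed

lemma nsq: "(x::nat)^2 + y^2 \<noteq> 4^k * (4*n+3)"
proof (induction k arbitrary: x y)
  case 0
  have "(x^2 + y^2) mod 4 = (x^2 mod 4 + y^2 mod 4) mod 4" by (simp add: mod_add_eq)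
  moreover have "x^2 mod 4 \<le> 1" "y^2 mod 4 \<le> 1" by (simp_all add: sq_mod4)
  ultimately have "(x^2 + y^2) mod 4 \<le> 2" by simp
  moreover have "(4 * n + 3) mod 4 = 3" by simp
  ultimately show ?case by (metis One_nat_def Suc_n_not_le_n numeral_2_eq_2 numeral_3_eq_3 power_0 mult_1)
next
  case (Suc k)
  show ?case
  proof
    assume e: "x^2 + y^2 = 4 ^ Suc k * (4 * n + 3)"
    then have "(x^2 + y^2) mod 4 = 0" by simp
    moreover have "(x^2 + y^2) mod 4 = (x^2 mod 4 + y^2 mod 4) mod 4" by (simp add: mod_add_eq)
    ultimately have "even x" "even y" by (auto simp: sq_mod4 split: if_splits)
    then obtain a b where ab: "x = 2 * a" "y = 2 * b" by (auto elim!: evenE)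
    have "4 * (a^2 + b^2) = 4 * (4 ^ k * (4 * n + 3))" using e unfolding ab by (simp add: power2_eq_square algebra_simps)
    then have "a^2 + b^2 = 4 ^ k * (4 * n + 3)" by simp
    then show False using Suc.IH by blast
  qed
qed

lemma closure4:
  fixes k n i \<alpha> :: nat
  assumes "2*k+1 < \<alpha>" "2^\<alpha> dvd i" "i \<le> 4^k*(4*n+3)"
  shows "\<exists>n'. 4^k*(4*n+3) - i = 4^k*(4*n'+3)"
proof -
  have "(2::nat)^(2*k+2) dvd 2^\<alpha>" using assms(1) by (intro le_imp_power_dvd) simp
  moreover have "(2::nat)^(2*k+2) = 4^k * 4" by (simp add: power_add power_mult)
  ultimately have "4^k * 4 dvd i" using assms(2) by (metis dvd_trans)
  then obtain t where t: "i = 4^k * (4 * t)" by (auto elim!: dvdE simp: ac_simps)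
  have "4 * t \<le> 4 * n + 3" using assms(3) unfolding t by simp
  then have tn: "t \<le> n" by simp
  have "4^k*(4*n+3) - i = 4^k*((4*n+3) - 4 * t)" unfolding t by (simp add: diff_mult_distrib2)
  also have "(4*n+3) - 4 * t = 4*(n-t)+3" using tn by simp
  finally show ?thesis by blast
qed

lemma even_card_divisors_nonsq:
  assumes r: "0 < (r::nat)" and ns: "\<And>d. d * d \<noteq> r"
  shows "even (card {m. m dvd r})"
proof -
  define D1 where "D1 = {m. m dvd r \<and> m * m < r}"
  define D2 where "D2 = {m. m dvd r \<and> r < m * m}"
  have fin: "finite {m. m dvd r}" using r by simp
  have split: "{m. m dvd r} = D1 \<union> D2" "D1 \<inter> D2 = {}"
    using ns by (auto simp: D1_def D2_def) (meson linorder_neqE_nat)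
  have fin12: "finite D1" "finite D2" using fin split by auto
  have key: "m dvd r \<Longrightarrow> m * (r div m) = r" for m by simp
  have bij: "bij_betw (\<lambda>m. r div m) D1 D2"
  proof (rule bij_betw_byWitness[where f' = "\<lambda>m. r div m"])
    show "\<forall>a\<in>D1. r div (r div a) = a" using r by (auto simp: D1_def div_div_eq_right dvd_div_eq_0_iff)
    show "\<forall>a\<in>D2. r div (r div a) = a" using r by (auto simp: D2_def div_div_eq_right dvd_div_eq_0_iff)
    show "(\<lambda>m. r div m) ` D1 \<subseteq> D2"
    proof
      fix x assume "x \<in> (\<lambda>m. r div m) ` D1"
      then obtain m where m: "m \<in> D1" "x = r div m" by blast
      have mr: "m * x = r" using m key by (auto simp: D1_def)
      have "m * m < m * x" using m mr by (auto simp: D1_def)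
      then have "m < x" by simp
      then have "m * x < x * x" by simp
      then show "x \<in> D2" using mr by (auto simp: D2_def intro: dvdI[of _ _ m] simp: mult.commute)
    qed
    show "(\<lambda>m. r div m) ` D2 \<subseteq> D1"
    proof
      fix x assume "x \<in> (\<lambda>m. r div m) ` D2"
      then obtain m where m: "m \<in> D2" "x = r div m" by blast
      have mr: "m * x = r" using m key by (auto simp: D2_def)
      have "m * x < m * m" using m mr by (auto simp: D2_def)
      then have "x < m" by simp
      then have "x * x < x * m" using mr r by (metis mult_less_mono1 mult_is_0 neq0_conv mult.commute)
      then show "x \<in> D1" using mr by (auto simp: D1_def intro: dvdI[of _ _ m] simp: mult.commute)
    qed
  qed
  have "card {m. m dvd r} = card D1 + card D2" unfolding split(1) by (rule card_Un_disjoint) (use fin12 split in auto)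
  also have "card D2 = card D1" using bij_betw_same_card[OF bij] by simp
  finally show ?thesis by simp
qed

lemma sq_mod8_aux: "\<forall>r\<in>{..<8::nat}. (r*r) mod 8 \<in> {0,1,4}" by (simp add: lessThan_nat_numeral)

lemma sq_mod8: "((d::nat) * d) mod 8 \<in> {0, 1, 4}"
proof -
  have "(d * d) mod 8 = ((d mod 8) * (d mod 8)) mod 8" by (rule mod_mult_eq[symmetric])
  moreover have "d mod 8 \<in> {..<8}" by simp
  ultimately show ?thesis using sq_mod8_aux by metis
qed

lemma mod8_3_aux: "\<forall>r\<in>{..<8::nat}. (3*r) mod 8 = 5 \<or> (3*r) mod 8 = 7 \<longrightarrow> r = 5 \<or> r = 7"
  by (simp add: lessThan_nat_numeral)

lemma coprime3: "\<not> 3 dvd (m::nat) \<Longrightarrow> coprime m 3"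
proof -
  assume m: "\<not> 3 dvd m"
  have g: "gcd m 3 dvd 3" by simp
  then have "gcd m 3 \<le> 3" by (rule dvd_imp_le) simp
  moreover have "gcd m 3 \<noteq> 0" by simp
  moreover have "gcd m 3 \<noteq> 2" using g by (metis dvd_refl odd_numeral dvd_trans even_numeral)
  moreover have "gcd m 3 \<noteq> 3" using m by (metis gcd_dvd1)
  ultimately have "gcd m 3 = 1" by linarith
  then show ?thesis by (simp add: coprime_iff_gcd_eq_1)
qed

lemma even_card_nd3: "N mod 8 = 5 \<or> N mod 8 = 7 \<Longrightarrow> even (card {m. m dvd (N::nat) \<and> \<not> 3 dvd m})"
proof (induction N rule: less_induct)
  case (less N)
  have N0: "0 < N" using less.prems by (auto intro: gr0I)
  show ?case
  proof (cases "3 dvd N")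
    case True
    then obtain N' where N': "N = 3 * N'" by blast
    have "N' < N" using N0 N' by simp
    have "(3 * N') mod 8 = (3 * (N' mod 8)) mod 8" by (simp add: mod_mult_right_eq)
    moreover have "N' mod 8 \<in> {..<8}" by simp
    ultimately have m8: "N' mod 8 = 5 \<or> N' mod 8 = 7" using less.prems mod8_3_aux unfolding N' by metis
    have "{m. m dvd N \<and> \<not> 3 dvd m} = {m. m dvd N' \<and> \<not> 3 dvd m}"
    proof (rule set_eqI iffI)+
      fix m assume "m \<in> {m. m dvd N \<and> \<not> 3 dvd m}"
      then have "m dvd 3 * N'" "\<not> 3 dvd m" unfolding N' by auto
      then show "m \<in> {m. m dvd N' \<and> \<not> 3 dvd m}" using coprime3 coprime_dvd_mult_right_iff by auto
    next
      fix m assume "m \<in> {m. m dvd N' \<and> \<not> 3 dvd m}"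
      then show "m \<in> {m. m dvd N \<and> \<not> 3 dvd m}" unfolding N' by auto
    qed
    then show ?thesis using less.IH[OF \<open>N' < N\<close> m8] by simp
  next
    case False
    have "{m. m dvd N \<and> \<not> 3 dvd m} = {m. m dvd N}" using False by (auto intro: dvd_trans)
    moreover have "d * d \<noteq> N" for d
    proof
      assume "d * d = N"
      then show False using sq_mod8[of d] less.prems by auto
    qed
    ultimately show ?thesis using even_card_divisors_nonsq[OF N0] by simp
  qed
qed


definition fcong :: "nat \<Rightarrow> 'a::comm_ring_1 fps \<Rightarrow> 'a fps \<Rightarrow> bool" where
  "fcong d f g \<longleftrightarrow> fps_X ^ d dvd (f - g)"

lemma fcong_refl[simp]: "fcong d f f" by (simp add: fcong_def)
lemma fcong_sym: "fcong d f g \<Longrightarrow> fcong d g f"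
proof -
  assume a: "fcong d f g"
  have "g - f = -(f - g)" by simp
  then show ?thesis using a unfolding fcong_def by (simp only: dvd_minus_iff)
qed
lemma fcong_trans: "fcong d f g \<Longrightarrow> fcong d g h \<Longrightarrow> fcong d f h"
proof -
  assume "fcong d f g" "fcong d g h"
  moreover have "f - h = (f - g) + (g - h)" by simp
  ultimately show ?thesis unfolding fcong_def by (metis dvd_add)
qed
lemma fcong_add: "fcong d f f' \<Longrightarrow> fcong d g g' \<Longrightarrow> fcong d (f + g) (f' + g')"
proof -
  assume "fcong d f f'" "fcong d g g'"
  moreover have "f + g - (f' + g') = (f - f') + (g - g')" by (simp add: algebra_simps)
  ultimately show ?thesis unfolding fcong_def by (metis dvd_add)
qed
lemma fcong_mult: "fcong d f f' \<Longrightarrow> fcong d g g' \<Longrightarrow> fcong d (f * g) (f' * g')"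
proof -
  assume a: "fcong d f f'" "fcong d g g'"
  have "f * g - f' * g' = f * (g - g') + (f - f') * g'" by (simp add: algebra_simps)
  moreover have "fps_X ^ d dvd f * (g - g')" using a(2) unfolding fcong_def by (simp add: dvd_mult)
  moreover have "fps_X ^ d dvd (f - f') * g'" using a(1) unfolding fcong_def by (simp add: dvd_mult2)
  ultimately show ?thesis unfolding fcong_def by (metis dvd_add)
qed
lemma fcong_mono: "d' \<le> d \<Longrightarrow> fcong d f g \<Longrightarrow> fcong d' f g"
  unfolding fcong_def by (meson dvd_trans le_imp_power_dvd)
lemma fcong_nth: "fcong d f g \<Longrightarrow> n < d \<Longrightarrow> fps_nth f n = fps_nth g n"
proof -
  assume "fcong d f g" "n < d"
  then obtain k where k: "f - g = fps_X ^ d * k" unfolding fcong_def by blast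
  have "fps_nth (f - g) n = 0" unfolding k fps_X_power_mult_nth using \<open>n < d\<close> by simp
  then show ?thesis by simp
qed
lemma fcong_power: "fcong d f g \<Longrightarrow> fcong d (f ^ n) (g ^ n)"
  by (induction n) (auto intro: fcong_mult)
lemma fcong_prod1:
  assumes "finite S" "\<And>x. x \<in> S \<Longrightarrow> fcong d (f x) 1"
  shows "fcong d (prod f S) 1"
  using assms
proof (induction S rule: finite_induct)
  case (insert x F)
  have a: "fcong d (f x) 1" using insert.prems by simp
  have b: "fcong d (prod f F) 1" using insert.IH insert.prems by simp
  have "fcong d (f x * prod f F) (1 * 1)" by (rule fcong_mult[OF a b])
  then show ?case using insert.hyps by simp
qed simp
lemma fcong_Xpow: "d \<le> m \<Longrightarrow> fcong d (fps_X ^ m * h + 1) 1"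
  unfolding fcong_def by (simp add: le_imp_power_dvd dvd_mult2)

definition Ge :: "nat \<Rightarrow> 'a::comm_ring_1 fps" where
  "Ge m = Abs_fps (\<lambda>n. if m dvd n then 1 else 0)"

lemma Ge_nth: "fps_nth (Ge m) n = (if m dvd n then 1 else 0)"
  by (simp add: Ge_def)

lemma Ge_inv: assumes "0 < m" shows "(1 - fps_X ^ m) * (Ge m :: 'a::comm_ring_1 fps) = 1"
proof (rule fps_ext)
  fix n
  have e: "(1 - fps_X ^ m) * (Ge m :: 'a fps) = Ge m - fps_X ^ m * Ge m"
    by (simp add: left_diff_distrib)
  have "fps_nth (Ge m - fps_X ^ m * Ge m :: 'a fps) n = fps_nth (1 :: 'a fps) n"
  proof (cases "n < m")
    case True
    have "fps_nth (fps_X ^ m * Ge m :: 'a fps) n = 0" using True by (simp add: fps_X_power_mult_nth)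
    moreover have "fps_nth (Ge m :: 'a fps) n = (if n = 0 then 1 else 0)"
    proof (cases "n = 0")
      case False
      then have "\<not> m dvd n" using True by (auto dest: dvd_imp_le)
      then show ?thesis using False by (simp add: Ge_nth)
    qed (simp add: Ge_nth)
    ultimately show ?thesis by (simp add: fps_one_nth)
  next
    case False
    then have "fps_nth (fps_X ^ m * Ge m :: 'a fps) n = fps_nth (Ge m :: 'a fps) (n - m)"
      by (simp add: fps_X_power_mult_nth)
    moreover have "m dvd (n - m) \<longleftrightarrow> m dvd n" using False by (simp add: dvd_minus_self)
    moreover have "n \<noteq> 0" using False assms by simp
    ultimately show ?thesis by (simp add: Ge_nth fps_one_nth)
  qed
  then show "fps_nth ((1 - fps_X ^ m) * (Ge m :: 'a fps)) n = fps_nth 1 n" by (simp only: e)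
qed

lemma Ge_eq: "0 < m \<Longrightarrow> (Ge m :: 'a::comm_ring_1 fps) = 1 + fps_X ^ m * Ge m"
  using Ge_inv[of m] by (simp add: algebra_simps)

lemma fcong_Ge: "0 < m \<Longrightarrow> d \<le> m \<Longrightarrow> fcong d (Ge m :: 'a::comm_ring_1 fps) 1"
  using fcong_Xpow[of d m "Ge m"] Ge_eq[of m] by (metis add.commute)

definition Op :: "nat \<Rightarrow> 'a::comm_ring_1 fps" where
  "Op m = (1 + fps_X ^ m) * Ge m"
definition Wp :: "nat \<Rightarrow> 'a::comm_ring_1 fps" where
  "Wp m = (1 - fps_X ^ m) ^ 2 * Ge (2 * m)"

lemma Op_Wp: assumes "0 < m" shows "Op m * Wp m = (1 :: 'a::comm_ring_1 fps)"
proof -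
  have h: "(1 + fps_X^m) * (1 - fps_X^m) = (1 - fps_X^(2*m) :: 'a fps)"
  proof -
    have "fps_X^(2*m) = fps_X^m * (fps_X^m :: 'a fps)" by (simp add: mult_2 power_add)
    then show ?thesis by (simp add: algebra_simps)
  qed
  have "Op m * Wp m = ((1 + fps_X^m) * (1 - fps_X^m)) * (Ge (2*m) :: 'a fps) * ((1 - fps_X ^ m) * Ge m)"
    unfolding Op_def Wp_def by (simp add: power2_eq_square ac_simps)
  also have "\<dots> = ((1 - fps_X ^ (2*m)) * (Ge (2*m) :: 'a fps)) * ((1 - fps_X ^ m) * Ge m)"
    by (simp only: h)
  also have "\<dots> = 1" using assms by (simp add: Ge_inv)
  finally show ?thesis .
qed

lemma Op_eq: "0 < m \<Longrightarrow> (Op m :: 'a::comm_ring_1 fps) = 1 + fps_X ^ m * Ge m + fps_X ^ m * Ge m"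
proof -
  assume m: "0 < m"
  have "(Op m :: 'a fps) = (1 + fps_X ^ m) * Ge m - (1 - fps_X ^ m) * Ge m + 1"
    using Ge_inv[OF m] unfolding Op_def by simp
  then show ?thesis by (simp add: algebra_simps)
qed

lemma Op_nth: "0 < m \<Longrightarrow> fps_nth (Op m :: 'a::comm_ring_1 fps) i = (if i = 0 then 1 else if m dvd i then 2 else 0)"
proof -
  assume m: "0 < m"
  have "fps_nth (Op m :: 'a fps) i = fps_nth 1 i + fps_nth (fps_X ^ m * Ge m) i + fps_nth (fps_X ^ m * Ge m) i"
    by (simp only: Op_eq[OF m] fps_add_nth)
  moreover have "fps_nth (fps_X ^ m * Ge m :: 'a fps) i = (if i \<noteq> 0 \<and> m dvd i then 1 else 0)"
  proof (cases "i < m")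
    case True
    then have "\<not> (i \<noteq> 0 \<and> m dvd i)" by (auto dest: dvd_imp_le)
    then show ?thesis using True by (simp add: fps_X_power_mult_nth)
  next
    case False
    then have "m dvd (i - m) \<longleftrightarrow> m dvd i" by (simp add: dvd_minus_self)
    then show ?thesis using False m by (simp add: fps_X_power_mult_nth Ge_nth)
  qed
  ultimately show ?thesis by (simp add: fps_one_nth)
qed

lemma fcong_Op: "0 < m \<Longrightarrow> d \<le> m \<Longrightarrow> fcong d (Op m :: 'a::comm_ring_1 fps) 1"
proof -
  assume m: "0 < m" "d \<le> m"
  have "(Op m :: 'a fps) = fps_X^m * (Ge m + Ge m) + 1"
    by (simp only: Op_eq[OF m(1)] distrib_left add_ac)
  then show ?thesis using fcong_Xpow[OF m(2), of "Ge m + Ge m"] by simp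
qed


fun qb :: "'a::comm_ring_1 \<Rightarrow> nat \<Rightarrow> nat \<Rightarrow> 'a" where
  "qb b 0 k = (if k = 0 then 1 else 0)"
| "qb b (Suc n) 0 = 1"
| "qb b (Suc n) (Suc k) = qb b n (Suc k) + b ^ (n - k) * qb b n k"

lemma qb_above: "n < k \<Longrightarrow> qb b n k = 0"
proof (induction n arbitrary: k)
  case 0 then show ?case by simp
next
  case (Suc n) then show ?case by (cases k) auto
qed

lemma qb_0[simp]: "qb b n 0 = 1"
  by (cases n) auto

lemma qb_diag: "qb b n n = 1"
  by (induction n) (auto simp: qb_above)

lemma prod_lessThan_add: "(\<Prod>j<a+c. f j) = (\<Prod>j<a. f j) * (\<Prod>j<c. f (a + j :: nat))"
  by (induction c) (auto simp: ac_simps)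

lemma rothe:
  fixes q x y :: "'a::comm_ring_1"
  shows "(\<Prod>j<n. x + y * q ^ (2 * j)) =
         (\<Sum>k\<le>n. q ^ (k * (k - 1)) * qb (q^2) n k * y ^ k * x ^ (n - k))"
proof (induction n)
  case 0 then show ?case by simp
next
  case (Suc n)
  define g where "g k = q ^ (k * (k - 1)) * qb (q^2) n k * y ^ k * x ^ (Suc n - k)" for k
  have A: "(\<Sum>k\<le>n. q ^ (k * (k - 1)) * qb (q^2) n k * y ^ k * x ^ (n - k)) * x
        = x ^ Suc n + (\<Sum>k\<le>n. q ^ ((k+1) * k) * qb (q^2) n (Suc k) * y ^ (Suc k) * x ^ (n - k))"
  proof -
    have "(\<Sum>k\<le>n. q ^ (k * (k - 1)) * qb (q^2) n k * y ^ k * x ^ (n - k)) * x = (\<Sum>k\<le>n. g k)"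
      unfolding g_def sum_distrib_right
      by (intro sum.cong refl) (simp add: Suc_diff_le mult.assoc)
    also have "\<dots> = (\<Sum>k\<le>Suc n. g k)" by (simp add: g_def qb_above)
    also have "\<dots> = g 0 + (\<Sum>k\<le>n. g (Suc k))" by (rule sum.atMost_Suc_shift)
    also have "\<dots> = x ^ Suc n + (\<Sum>k\<le>n. q ^ ((k+1) * k) * qb (q^2) n (Suc k) * y ^ (Suc k) * x ^ (n - k))"
      by (simp add: g_def)
    finally show ?thesis .
  qed
  have B: "(\<Sum>k\<le>n. q ^ (k * (k - 1)) * qb (q^2) n k * y ^ k * x ^ (n - k)) * (y * q ^ (2 * n))
        = (\<Sum>k\<le>n. q ^ ((k+1) * k) * ((q^2) ^ (n - k) * qb (q^2) n k) * y ^ (Suc k) * x ^ (n - k))"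
    unfolding sum_distrib_right
  proof (intro sum.cong refl)
    fix k assume "k \<in> {..n}"
    then obtain d where d: "n = k + d" by (auto simp: le_iff_add)
    have e: "k * (k - 1) + 2 * n = (k+1) * k + 2 * (n - k)"
      unfolding d by (cases k) (auto simp: algebra_simps)
    have h: "q ^ (k * (k - 1)) * q ^ (2 * n) = q ^ ((k+1) * k) * (q^2) ^ (n - k)"
      by (simp only: power_add[symmetric] power_mult[symmetric] e)
    have "q ^ (k * (k - 1)) * qb (q\<^sup>2) n k * y ^ k * x ^ (n - k) * (y * q ^ (2 * n)) =
         (q ^ (k * (k - 1)) * q ^ (2 * n)) * (qb (q\<^sup>2) n k * (y ^ k * y) * x ^ (n - k))"
      by (simp only: ac_simps)
    also have "\<dots> = (q ^ ((k+1) * k) * (q^2) ^ (n - k)) * (qb (q\<^sup>2) n k * (y ^ k * y) * x ^ (n - k))"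
      by (simp only: h)
    also have "\<dots> = q ^ ((k + 1) * k) * ((q\<^sup>2) ^ (n - k) * qb (q\<^sup>2) n k) * (y ^ k * y) * x ^ (n - k)"
      by (simp only: ac_simps)
    also have "y ^ k * y = y ^ Suc k" by (simp only: power_Suc2)
    finally show "q ^ (k * (k - 1)) * qb (q\<^sup>2) n k * y ^ k * x ^ (n - k) * (y * q ^ (2 * n)) =
         q ^ ((k + 1) * k) * ((q\<^sup>2) ^ (n - k) * qb (q\<^sup>2) n k) * y ^ Suc k * x ^ (n - k)" .
  qed
  have "(\<Prod>j<Suc n. x + y * q ^ (2 * j)) = (\<Prod>j<n. x + y * q ^ (2 * j)) * (x + y * q ^ (2 * n))"
    by simp
  also have "\<dots> = x ^ Suc n + (\<Sum>k\<le>n. q ^ ((k+1) * k) * qb (q^2) n (Suc k) * y ^ (Suc k) * x ^ (n - k))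
     + (\<Sum>k\<le>n. q ^ ((k+1) * k) * ((q^2) ^ (n - k) * qb (q^2) n k) * y ^ (Suc k) * x ^ (n - k))"
    unfolding Suc.IH distrib_left A[symmetric] B[symmetric] by (simp add: algebra_simps)
  also have "\<dots> = x ^ Suc n + (\<Sum>k\<le>n. q ^ ((k+1) * k) * qb (q^2) (Suc n) (Suc k) * y ^ (Suc k) * x ^ (n - k))"
    by (simp add: sum.distrib[symmetric] algebra_simps)
  also have "\<dots> = (\<Sum>k\<le>Suc n. q ^ (k * (k - 1)) * qb (q^2) (Suc n) k * y ^ k * x ^ (Suc n - k))"
    by (subst sum.atMost_Suc_shift) (simp add: mult.commute)
  finally show ?case .
qed


definition dd :: "nat \<Rightarrow> nat \<Rightarrow> nat" where "dd k M = (if k \<le> M then M - k else k - M)"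

lemma exp_id:
  assumes "1 \<le> M" "k \<le> 2 * M"
  shows "k*(k-1) + (2*M-1)*(2*M-k) = dd k M ^ 2 + (M*(M-1) + M*(2*M-1))"
proof -
  have h1: "int (k*(k-1)) = int k * (int k - 1)" by (cases k) (auto simp: algebra_simps)
  have h2: "int (M*(M-1)) = int M * (int M - 1)" by (cases M) (auto simp: algebra_simps)
  have h3: "int (2*M-1) = 2 * int M - 1" using assms by auto
  have h4: "int (2*M-k) = 2 * int M - int k" using assms by auto
  have h5: "int (dd k M ^ 2) = (int k - int M)^2" by (auto simp: dd_def of_nat_diff power2_eq_square algebra_simps)
  have "int (k*(k-1) + (2*M-1)*(2*M-k)) = int (dd k M ^ 2 + (M*(M-1) + M*(2*M-1)))"
    unfolding of_nat_add unfolding h1 h2 h5 unfolding of_nat_mult h3 h4 by (simp add: power2_eq_square algebra_simps)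
  then show ?thesis by (simp only: of_nat_eq_iff)
qed

lemma sum_2j: "(\<Sum>j<M. 2*j) = M*(M-1::nat)"
proof (induction M)
  case (Suc M) then show ?case by (cases M) (simp_all add: algebra_simps)
qed simp

definition Od :: "'a::comm_ring_1 \<Rightarrow> nat \<Rightarrow> 'a" where
  "Od q M = (\<Prod>j<M. 1 - q ^ (2*j+1))"

lemma prod_first:
  fixes q :: "'a::comm_ring_1"
  shows "(\<Prod>j<M. q^(2*M-1) - q^(2*j)) = (-1)^M * q^(M*(M-1)) * Od q M"
proof -
  have "(\<Prod>j<M. q^(2*M-1) - q^(2*j)) = (\<Prod>j<M. (-(q^(2*j))) * (1 - q^(2*(M - Suc j)+1)))"
  proof (intro prod.cong refl)
    fix j assume "j \<in> {..<M}"
    then have "2*M-1 = 2*j + (2*(M - Suc j)+1)" by auto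
    then have "q^(2*M-1) = q^(2*j) * q^(2*(M - Suc j)+1)" by (metis power_add)
    then show "q^(2*M-1) - q^(2*j) = (-(q^(2*j))) * (1 - q^(2*(M - Suc j)+1))"
      by (simp add: algebra_simps)
  qed
  also have "\<dots> = (\<Prod>j<M. -(q^(2*j))) * (\<Prod>j<M. 1 - q^(2*(M - Suc j)+1))"
    by (rule prod.distrib)
  also have "(\<Prod>j<M. 1 - q^(2*(M - Suc j)+1)) = Od q M"
    unfolding Od_def by (rule prod.nat_diff_reindex[where g = "\<lambda>j. 1 - q^(2*j+1)"])
  also have "(\<Prod>j<M. -(q^(2*j))) = (-1)^M * q^(M*(M-1))"
  proof -
    have "(\<Prod>j<M. -(q^(2*j))) = (-1)^M * (\<Prod>j<M. q^(2*j))"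
      by (induction M) (simp_all add: algebra_simps)
    also have "(\<Prod>j<M. q^(2*j)) = q^(\<Sum>j<M. 2*j)" by (simp add: power_sum)
    finally show ?thesis by (simp add: sum_2j)
  qed
  finally show ?thesis by simp
qed

lemma prod_second:
  fixes q :: "'a::comm_ring_1"
  assumes "1 \<le> M"
  shows "(\<Prod>j<M. q^(2*M-1) - q^(2*(M+j))) = q^(M*(2*M-1)) * Od q M"
proof -
  have "(\<Prod>j<M. q^(2*M-1) - q^(2*(M+j))) = (\<Prod>j<M. q^(2*M-1) * (1 - q^(2*j+1)))"
  proof (intro prod.cong refl)
    fix j assume "j \<in> {..<M}"
    have "2*(M+j) = (2*M-1) + (2*j+1)" using assms by auto
    then have "q^(2*(M+j)) = q^(2*M-1) * q^(2*j+1)" by (metis power_add)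
    then show "q^(2*M-1) - q^(2*(M+j)) = q^(2*M-1) * (1 - q^(2*j+1))"
      by (simp add: algebra_simps)
  qed
  also have "\<dots> = (\<Prod>j<M. q^(2*M-1)) * Od q M"
    by (simp add: prod.distrib Od_def)
  also have "(\<Prod>j<M. q^(2*M-1)) = q^(M*(2*M-1))"
    by (simp add: power_mult[symmetric] mult.commute)
  finally show ?thesis .
qed

lemma jtp_generic:
  fixes q :: "'a::comm_ring_1"
  assumes M: "1 \<le> M"
  shows "q ^ (M*(M-1) + M*(2*M-1)) * ((-1)^M * Od q M ^ 2) =
         q ^ (M*(M-1) + M*(2*M-1)) * (\<Sum>k\<le>2*M. (-1)^k * q^(dd k M ^ 2) * qb (q^2) (2*M) k)"
proof -
  define E where "E = M*(M-1) + M*(2*M-1)"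
  have "(\<Prod>j<2*M. q^(2*M-1) + (-1) * q ^ (2 * j)) =
         (\<Sum>k\<le>2*M. q ^ (k * (k - 1)) * qb (q^2) (2*M) k * (-1) ^ k * (q^(2*M-1)) ^ (2*M - k))"
    by (rule rothe)
  also have "\<dots> = (\<Sum>k\<le>2*M. q ^ E * ((-1)^k * q^(dd k M ^ 2) * qb (q^2) (2*M) k))"
  proof (intro sum.cong refl)
    fix k assume "k \<in> {..2*M}"
    then have "k*(k-1) + (2*M-1)*(2*M-k) = dd k M ^ 2 + E" using exp_id[OF M] E_def by auto
    then have h: "q ^ (k * (k - 1)) * (q^(2*M-1)) ^ (2*M - k) = q ^ E * q^(dd k M ^ 2)"
      by (simp add: power_mult[symmetric] power_add[symmetric] add.commute)
    have "q ^ (k * (k - 1)) * qb (q^2) (2*M) k * (-1) ^ k * (q^(2*M-1)) ^ (2*M - k) =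
        (q ^ (k * (k - 1)) * (q^(2*M-1)) ^ (2*M - k)) * ((-1) ^ k * qb (q^2) (2*M) k)"
      by (simp add: ac_simps)
    also have "\<dots> = (q ^ E * q^(dd k M ^ 2)) * ((-1) ^ k * qb (q^2) (2*M) k)" by (simp only: h)
    finally show "q ^ (k * (k - 1)) * qb (q^2) (2*M) k * (-1) ^ k * (q^(2*M-1)) ^ (2*M - k) =
        q ^ E * ((-1)^k * q^(dd k M ^ 2) * qb (q^2) (2*M) k)"
      by (simp add: ac_simps)
  qed
  also have "\<dots> = q ^ E * (\<Sum>k\<le>2*M. (-1)^k * q^(dd k M ^ 2) * qb (q^2) (2*M) k)"
    by (simp add: sum_distrib_left)
  finally have R: "(\<Prod>j<2*M. q^(2*M-1) + (-1) * q ^ (2 * j)) = q ^ E * (\<Sum>k\<le>2*M. (-1)^k * q^(dd k M ^ 2) * qb (q^2) (2*M) k)" .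
  have "(\<Prod>j<2*M. q^(2*M-1) + (-1) * q ^ (2 * j)) = (\<Prod>j<M+M. q^(2*M-1) - q ^ (2 * j))"
    by (simp add: mult_2)
  also have "\<dots> = (\<Prod>j<M. q^(2*M-1) - q^(2*j)) * (\<Prod>j<M. q^(2*M-1) - q^(2*(M+j)))"
    by (rule prod_lessThan_add)
  also have "\<dots> = q ^ E * ((-1)^M * Od q M ^ 2)"
    unfolding prod_first prod_second[OF M] E_def by (simp add: power_add power2_eq_square ac_simps)
  finally show ?thesis using R E_def by simp
qed


lemma fps_X_cancel:
  assumes "fps_X ^ E * f = fps_X ^ E * (g :: 'a::comm_ring_1 fps)" shows "f = g"
proof (rule fps_ext)
  fix n
  have "fps_nth (fps_X ^ E * f) (n + E) = fps_nth (fps_X ^ E * g) (n + E)" using assms by simp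
  then show "fps_nth f n = fps_nth g n" by (simp add: fps_X_power_mult_nth)
qed

lemma jtp_fps:
  assumes M: "1 \<le> M"
  shows "Od (fps_X :: 'a::comm_ring_1 fps) M ^ 2 =
         (\<Sum>k\<le>2*M. (-1)^(k+M) * fps_X^(dd k M ^ 2) * qb (fps_X^2) (2*M) k)"
proof -
  have "(-1)^M * Od (fps_X :: 'a fps) M ^ 2 = (\<Sum>k\<le>2*M. (-1)^k * fps_X^(dd k M ^ 2) * qb (fps_X^2) (2*M) k)"
    by (rule fps_X_cancel[OF jtp_generic[OF M]])
  then have "(-1)^M * ((-1)^M * Od (fps_X :: 'a fps) M ^ 2) = (-1)^M * (\<Sum>k\<le>2*M. (-1)^k * fps_X^(dd k M ^ 2) * qb (fps_X^2) (2*M) k)"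
    by simp
  moreover have "(-1)^M * ((-1)^M * Od (fps_X :: 'a fps) M ^ 2) = Od fps_X M ^ 2"
    by (simp flip: mult.assoc power_add add: power_mult[symmetric] mult_2[symmetric])
  ultimately show ?thesis by (simp add: sum_distrib_left power_add ac_simps)
qed

definition Pk :: "nat \<Rightarrow> 'a::comm_ring_1 fps" where
  "Pk j = (\<Prod>i<j. Ge (2*(i+1)))"
definition Em :: "nat \<Rightarrow> 'a::comm_ring_1 fps" where
  "Em j = (\<Prod>i<j. 1 - fps_X^(2*(i+1)))"

lemma Pk_Suc: "(Pk (Suc j) :: 'a::comm_ring_1 fps) = Pk j + fps_X^(2*(j+1)) * Pk (Suc j)"
proof -
  have "(Pk (Suc j) :: 'a fps) = Pk j * Ge (2*(j+1))" by (simp add: Pk_def)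
  also have "\<dots> = Pk j * (1 + fps_X^(2*(j+1)) * Ge (2*(j+1)))" by (subst Ge_eq) auto
  also have "\<dots> = Pk j + fps_X^(2*(j+1)) * (Pk j * Ge (2*(j+1)))" by (simp add: algebra_simps)
  also have "Pk j * Ge (2*(j+1)) = (Pk (Suc j) :: 'a fps)" by (simp add: Pk_def)
  finally show ?thesis .
qed

lemma fcong_Pk1: "fcong 2 (Pk j :: 'a::comm_ring_1 fps) 1"
  unfolding Pk_def by (rule fcong_prod1) (auto intro: fcong_Ge)

lemma fcong_X_mult: "fcong d f g \<Longrightarrow> fcong (d + e) (fps_X ^ e * f) (fps_X ^ e * g)"
proof -
  assume "fcong d f g"
  then obtain k where k: "f - g = fps_X ^ d * k" unfolding fcong_def by (elim dvdE)
  have "fps_X ^ e * f - fps_X ^ e * g = fps_X ^ e * (f - g)" by (simp add: right_diff_distrib)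
  also have "\<dots> = fps_X ^ (d + e) * k" by (simp add: k power_add ac_simps)
  finally show ?thesis unfolding fcong_def by simp
qed

lemma fcong_Xpow': "d \<le> m \<Longrightarrow> fcong d (1 - fps_X ^ m) 1"
proof -
  assume "d \<le> m"
  then have "fcong d (fps_X ^ m * (-1) + 1) 1" by (rule fcong_Xpow)
  moreover have "fps_X ^ m * (-1) + 1 = (1 - fps_X ^ m :: 'a fps)" by (simp add: algebra_simps)
  ultimately show ?thesis by simp
qed

lemma stab: "k \<le> n \<Longrightarrow> fcong (2*(k+1)) (qb (fps_X^2) n k :: 'a::comm_ring_1 fps) (Pk (n-k))"
proof (induction n arbitrary: k)
  case 0 then show ?case by (simp add: Pk_def)
next
  case (Suc n)
  show ?case
  proof (cases k)
    case 0 then show ?thesis using fcong_sym[OF fcong_Pk1] by simp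
  next
    case (Suc k')
    show ?thesis
    proof (cases "k' = n")
      case True then show ?thesis using Suc by (simp add: qb_above qb_diag Pk_def)
    next
      case False
      with Suc \<open>k \<le> Suc n\<close> have kn: "k' < n" by auto
      obtain j where j: "n - k' = Suc j" using kn by (metis Suc_diff_Suc)
      have i0: "fcong (2*(Suc k'+1)) (qb (fps_X^2) n (Suc k') :: 'a fps) (Pk (n - Suc k'))"
        by (rule Suc.IH) (use kn in simp)
      have nj: "n - Suc k' = j" using j by simp
      have i1: "fcong (2*(k+1)) (qb (fps_X^2) n (Suc k') :: 'a fps) (Pk j)"
        using i0 unfolding nj \<open>k = Suc k'\<close> .
      have i2: "fcong (2*(k'+1)) (qb (fps_X^2) n k' :: 'a fps) (Pk (n - k'))"
        using Suc.IH[of k'] kn by simp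
      have i3: "fcong (2*(k'+1) + 2 * (n - k')) ((fps_X^2)^(n-k') * qb (fps_X^2) n k' :: 'a fps) (fps_X^(2*(n-k')) * Pk (n - k'))"
        using fcong_X_mult[OF i2, of "2*(n-k')"] by (simp add: power_mult)
      have i4: "fcong (2*(k+1)) ((fps_X^2)^(n-k') * qb (fps_X^2) n k' :: 'a fps) (fps_X^(2*(n-k')) * Pk (n - k'))"
        by (rule fcong_mono[OF _ i3]) (use kn Suc in auto)
      have q: "qb (fps_X^2) (Suc n) k = qb (fps_X^2) n (Suc k') + (fps_X^2)^(n-k') * (qb (fps_X^2) n k' :: 'a fps)"
        using Suc by simp
      have P: "Pk (Suc n - k) = Pk j + fps_X^(2*(n-k')) * (Pk (n - k') :: 'a fps)"
        using Pk_Suc[of j] j Suc by simp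
      show ?thesis unfolding q P by (rule fcong_add[OF i1 i4])
    qed
  qed
qed

lemma Pk_Em_inv: "Pk j * Em j = (1 :: 'a::comm_ring_1 fps)"
proof -
  have h: "Ge (2*(i+1)) * (1 - fps_X^(2*(i+1))) = (1::'a fps)" for i
    using Ge_inv[of "2*(i+1)"] by (simp only: mult.commute) simp
  have "Pk j * Em j = (\<Prod>i<j. Ge (2*(i+1)) * (1 - fps_X^(2*(i+1))) :: 'a fps)"
    unfolding Pk_def Em_def by (rule prod.distrib[symmetric])
  also have "\<dots> = 1" by (rule prod.neutral) (use h in blast)
  finally show ?thesis .
qed

lemma fcong_Em1: "d \<le> 2*(j+1) \<Longrightarrow> fcong d (\<Prod>i<c. 1 - fps_X^(2*(j+i+1)) :: 'a::comm_ring_1 fps) 1"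
proof (rule fcong_prod1)
  fix i assume "d \<le> 2*(j+1)"
  then show "fcong d (1 - fps_X^(2*(j+i+1)) :: 'a fps) 1" by (intro fcong_Xpow') simp
qed simp

lemma PE: "fcong (2*(min j m + 1)) (Pk j * Em m :: 'a::comm_ring_1 fps) 1"
proof (cases "j \<le> m")
  case True
  then obtain c where c: "m = j + c" by (auto simp: le_iff_add)
  have "(Em m :: 'a fps) = Em j * (\<Prod>i<c. 1 - fps_X^(2*(j+i+1)))"
    unfolding c Em_def prod_lessThan_add by (simp add: add.assoc)
  then have "(Pk j * Em m :: 'a fps) = (\<Prod>i<c. 1 - fps_X^(2*(j+i+1)))"
    by (simp add: Pk_Em_inv mult.assoc[symmetric])
  moreover have "fcong (2*(min j m + 1)) (\<Prod>i<c. 1 - fps_X^(2*(j+i+1)) :: 'a fps) 1"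
    by (rule fcong_Em1) (use True in simp)
  ultimately show ?thesis by simp
next
  case False
  then obtain c where c: "j = m + c" by (metis le_iff_add nat_le_linear)
  have "(Pk j :: 'a fps) = Pk m * (\<Prod>i<c. Ge (2*(m+i+1)))"
    unfolding c Pk_def prod_lessThan_add by (simp add: add.assoc)
  then have "(Pk j * Em m :: 'a fps) = (Pk m * Em m) * (\<Prod>i<c. Ge (2*(m+i+1)))"
    by (simp only: ac_simps)
  then have "(Pk j * Em m :: 'a fps) = (\<Prod>i<c. Ge (2*(m+i+1)))"
    by (simp only: Pk_Em_inv mult_1)
  moreover have "fcong (2*(m+1)) (\<Prod>i<c. Ge (2*(m+i+1)) :: 'a fps) 1"
    by (rule fcong_prod1) (auto intro: fcong_Ge)
  ultimately show ?thesis using False by simp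
qed

lemma fcong_sum: "(\<And>x. x \<in> S \<Longrightarrow> fcong d (f x) (g x)) \<Longrightarrow> fcong d (sum f S) (sum g S)"
proof (induction S rule: infinite_finite_induct)
  case (insert x F) then show ?case by (simp add: fcong_add)
qed auto

definition Theta :: "nat \<Rightarrow> 'a::comm_ring_1 fps" where
  "Theta m = (\<Sum>k\<le>2*m. (-1)^(k+m) * fps_X^(dd k m ^ 2))"

lemma ineq_dd: "k \<le> 2*m \<Longrightarrow> 2*m+1 \<le> 2 * (min k (2*m-k) + 1) + dd k m ^ 2"
proof -
  assume k: "k \<le> 2*m"
  have "2*m + 1 + (dd k m - 1)^2 \<le> 2 * (min k (2*m-k) + 1) + dd k m ^ 2"
  proof (cases "dd k m")
    case 0 then show ?thesis using k by (auto simp: dd_def split: if_splits)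
  next
    case (Suc t)
    then show ?thesis using k by (auto simp: dd_def power2_eq_square split: if_splits)
  qed
  then show ?thesis by linarith
qed

lemma gauss_fcong:
  assumes m: "1 \<le> m"
  shows "fcong (2*m+1) (Od fps_X m ^ 2 * Em m :: 'a::comm_ring_1 fps) (Theta m)"
proof -
  have "(Od fps_X m ^ 2 * Em m :: 'a fps) = (\<Sum>k\<le>2*m. (-1)^(k+m) * (fps_X^(dd k m ^ 2) * (qb (fps_X^2) (2*m) k * Em m)))"
    unfolding jtp_fps[OF m] sum_distrib_right by (simp add: ac_simps)
  also have "fcong (2*m+1) \<dots> (Theta m)"
    unfolding Theta_def
  proof (rule fcong_sum)
    fix k assume "k \<in> {..2*m}"
    then have k: "k \<le> 2*m" by simp
    have a: "fcong (2*(k+1)) (qb (fps_X^2) (2*m) k * Em m :: 'a fps) (Pk (2*m-k) * Em m)"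
      by (rule fcong_mult[OF stab[OF k] fcong_refl])
    have b: "fcong (2*(min (2*m-k) m + 1)) (Pk (2*m-k) * Em m :: 'a fps) 1" by (rule PE)
    have c: "fcong (2*(min k (2*m-k) + 1)) (qb (fps_X^2) (2*m) k * Em m :: 'a fps) 1"
      by (rule fcong_trans[OF fcong_mono[OF _ a] fcong_mono[OF _ b]]) auto
    have d: "fcong (2*(min k (2*m-k) + 1) + dd k m ^ 2) (fps_X^(dd k m ^ 2) * (qb (fps_X^2) (2*m) k * Em m) :: 'a fps) (fps_X^(dd k m ^ 2))"
      using fcong_X_mult[OF c] by simp
    show "fcong (2*m+1) ((-1)^(k+m) * (fps_X^(dd k m ^ 2) * (qb (fps_X^2) (2*m) k * Em m)) :: 'a fps) ((-1)^(k+m) * fps_X^(dd k m ^ 2))"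
      by (rule fcong_mult[OF fcong_refl fcong_mono[OF ineq_dd[OF k] d]])
  qed
  finally show ?thesis .
qed


definition OV :: "nat set \<Rightarrow> nat \<Rightarrow> (nat multiset \<times> nat set) set" where
  "OV P N = {(M, S). set_mset M \<subseteq> P \<and> sum_mset M = N \<and> S \<subseteq> set_mset M}"

lemma OV_empty: "OV {} N = (if N = 0 then {({#}, {})} else {})"
  by (auto simp: OV_def)

definition Ix :: "nat \<Rightarrow> nat \<Rightarrow> (nat \<times> bool) set" where
  "Ix p N = Sigma {i. i \<le> N \<and> p dvd i} (\<lambda>i. if i = 0 then {False} else UNIV)"

definition emb :: "nat \<Rightarrow> (nat \<times> bool) \<times> (nat multiset \<times> nat set) \<Rightarrow> nat multiset \<times> nat set" where
  "emb p x = (case x of ((i, b), (M, S)) \<Rightarrow> (M + replicate_mset (i div p) p, if b then insert p S else S))"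

lemma OV_insert:
  assumes p: "0 < p" "p \<notin> P"
  shows "OV (insert p P) N = emb p ` (Sigma (Ix p N) (\<lambda>x. OV P (N - fst x)))"
proof (rule set_eqI iffI)+
  fix z assume z: "z \<in> OV (insert p P) N"
  obtain M S where zMS: "z = (M, S)" by fastforce
  define j where "j = count M p"
  define M0 where "M0 = {#x \<in># M. x \<noteq> p#}"
  have Mdec: "M = M0 + replicate_mset j p"
    unfolding M0_def j_def by (rule multiset_eqI) simp
  have hM: "set_mset M \<subseteq> insert p P" "sum_mset M = N" "S \<subseteq> set_mset M" using z zMS by (auto simp: OV_def)
  have sM0: "set_mset M0 \<subseteq> P" using hM(1) by (auto simp: M0_def)
  have sum: "sum_mset M0 + j * p = N" using hM(2) by (subst (asm) Mdec) simp
  have jd: "j * p div p = j" using p by simp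
  let ?b = "p \<in> S"
  have bj: "?b \<Longrightarrow> j \<noteq> 0" using hM(3) by (auto simp: j_def)
  have "((j * p, ?b), (M0, S - {p})) \<in> Sigma (Ix p N) (\<lambda>x. OV P (N - fst x))"
    using sum sM0 hM(3) bj p(1) unfolding Ix_def OV_def
    by (auto simp: M0_def)
  moreover have "emb p ((j * p, ?b), (M0, S - {p})) = z"
    unfolding emb_def zMS using jd Mdec by auto
  ultimately show "z \<in> emb p ` (Sigma (Ix p N) (\<lambda>x. OV P (N - fst x)))" by (metis image_eqI)
next
  fix z assume "z \<in> emb p ` (Sigma (Ix p N) (\<lambda>x. OV P (N - fst x)))"
  then obtain i b M S where h: "((i, b), (M, S)) \<in> Sigma (Ix p N) (\<lambda>x. OV P (N - fst x))"
      and z: "z = emb p ((i, b), (M, S))" by auto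
  from h have i: "i \<le> N" "p dvd i" "b \<Longrightarrow> i \<noteq> 0" and MS: "set_mset M \<subseteq> P" "sum_mset M = N - i" "S \<subseteq> set_mset M"
    by (auto simp: Ix_def OV_def split: if_splits)
  have "i div p * p = i" using i(2) by simp
  then have "sum_mset (M + replicate_mset (i div p) p) = N" using MS(2) i(1) by simp
  moreover have "b \<Longrightarrow> p \<in># replicate_mset (i div p) p" using i p by (auto elim!: dvdE)
  ultimately show "z \<in> OV (insert p P) N" unfolding z emb_def OV_def using MS by auto
qed

lemma emb_inj:
  assumes p: "0 < p" "p \<notin> P"
  shows "inj_on (emb p) (Sigma (Ix p N) (\<lambda>x. OV P (N - fst x)))"
proof (rule inj_onI)
  fix x y assume x: "x \<in> Sigma (Ix p N) (\<lambda>x. OV P (N - fst x))" and y: "y \<in> Sigma (Ix p N) (\<lambda>x. OV P (N - fst x))"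
    and e: "emb p x = emb p y"
  obtain i b M S where xx: "x = ((i, b), (M, S))" by (metis prod.collapse)
  obtain i' b' M' S' where yy: "y = ((i', b'), (M', S'))" by (metis prod.collapse)
  from x have hx: "p dvd i" "set_mset M \<subseteq> P" "S \<subseteq> set_mset M" unfolding xx by (auto simp: Ix_def OV_def)
  from y have hy: "p dvd i'" "set_mset M' \<subseteq> P" "S' \<subseteq> set_mset M'" unfolding yy by (auto simp: Ix_def OV_def)
  have pM: "p \<notin># M" "p \<notin># M'" "p \<notin> S" "p \<notin> S'" using hx hy p by auto
  from e have e1: "M + replicate_mset (i div p) p = M' + replicate_mset (i' div p) p"
    and e2: "(if b then insert p S else S) = (if b' then insert p S' else S')"
    unfolding xx yy emb_def by auto
  have "count (M + replicate_mset (i div p) p) p = count (M' + replicate_mset (i' div p) p) p"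
    using e1 by simp
  then have "i div p = i' div p" using pM by (simp add: not_in_iff)
  then have ii: "i = i'" using hx(1) hy(1) by (metis dvd_div_mult_self)
  then have MM: "M = M'" using e1 by simp
  have bb: "b = b'" using e2 pM by (auto split: if_splits)
  have SS: "S = S'" using e2 pM bb by (auto split: if_splits)
  show "x = y" unfolding xx yy using ii MM bb SS by simp
qed

lemma finite_Ix: "0 < p \<Longrightarrow> finite (Ix p N)"
  unfolding Ix_def by (rule finite_SigmaI) auto

lemma sum_Ix:
  fixes f :: "nat \<Rightarrow> nat"
  assumes "0 < p"
  shows "(\<Sum>x\<in>Ix p N. f (fst x)) = (\<Sum>i\<in>{i. i \<le> N \<and> p dvd i}. (if i = 0 then 1 else 2) * f i)"
proof -
  have fin: "finite {i. i \<le> N \<and> p dvd i}" by auto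
  have "(\<Sum>x\<in>Ix p N. f (fst x)) = (\<Sum>i\<in>{i. i \<le> N \<and> p dvd i}. \<Sum>b\<in>(if i = 0 then {False} else UNIV). f i)"
    unfolding Ix_def by (subst sum.Sigma) (use fin in \<open>auto simp: split_def\<close>)
  also have "\<dots> = (\<Sum>i\<in>{i. i \<le> N \<and> p dvd i}. (if i = 0 then 1 else 2) * f i)"
    by (intro sum.cong refl) (auto simp: UNIV_bool mult_2)
  finally show ?thesis .
qed

lemma count_main:
  assumes "finite P" "0 \<notin> P"
  shows "finite (OV P N) \<and> fps_nth (\<Prod>m\<in>P. Op m :: 'a::comm_ring_1 fps) N = of_nat (card (OV P N))"
  using assms
proof (induction P arbitrary: N rule: finite_induct)
  case empty then show ?case by (simp add: OV_empty)
next
  case (insert p P)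
  have p: "0 < p" "p \<notin> P" using insert by auto
  have IH: "\<And>n. finite (OV P n) \<and> fps_nth (\<Prod>m\<in>P. Op m :: 'a fps) n = of_nat (card (OV P n))"
    using insert by auto
  let ?Sig = "Sigma (Ix p N) (\<lambda>x. OV P (N - fst x))"
  have finS: "finite ?Sig" using finite_Ix[OF p(1)] IH by auto
  have fin: "finite (OV (insert p P) N)" unfolding OV_insert[OF p] using finS by simp
  have "card (OV (insert p P) N) = card ?Sig"
    unfolding OV_insert[OF p] by (rule card_image[OF emb_inj[OF p]])
  also have "\<dots> = (\<Sum>x\<in>Ix p N. card (OV P (N - fst x)))"
    by (rule card_SigmaI) (use finite_Ix[OF p(1)] IH in auto)
  also have "\<dots> = (\<Sum>i\<in>{i. i \<le> N \<and> p dvd i}. (if i = 0 then 1 else 2) * card (OV P (N - i)))"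
    by (rule sum_Ix[OF p(1)])
  finally have C: "card (OV (insert p P) N) = (\<Sum>i\<in>{i. i \<le> N \<and> p dvd i}. (if i = 0 then 1 else 2) * card (OV P (N - i)))" .
  have "fps_nth (\<Prod>m\<in>insert p P. Op m :: 'a fps) N = fps_nth (Op p * (\<Prod>m\<in>P. Op m)) N"
    using insert by simp
  also have "\<dots> = (\<Sum>i=0..N. fps_nth (Op p :: 'a fps) i * fps_nth (\<Prod>m\<in>P. Op m) (N - i))"
    by (rule fps_mult_nth)
  also have "\<dots> = (\<Sum>i\<in>{0..N}. if p dvd i then of_nat ((if i = 0 then 1 else 2) * card (OV P (N - i))) else 0)"
    by (intro sum.cong refl) (auto simp: Op_nth[OF p(1)] IH)
  also have "\<dots> = (\<Sum>i\<in>{i \<in> {0..N}. p dvd i}. of_nat ((if i = 0 then 1 else 2) * card (OV P (N - i))))"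
    by (rule sum.inter_filter[symmetric]) simp
  also have "{i \<in> {0..N}. p dvd i} = {i. i \<le> N \<and> p dvd i}" by auto
  finally show ?case using C fin by simp
qed


declare fcong_trans[trans]

lemma fps_three: "(3::'a::comm_ring_1) = 0 \<Longrightarrow> (3::'a fps) = 0"
  by (metis fps_const_0_eq_0 numeral_fps_const)

lemma cube_add: "(3::'a::comm_ring_1) = 0 \<Longrightarrow> (a + b :: 'a) ^ 3 = a ^ 3 + b ^ 3"
proof -
  assume h: "(3::'a) = 0"
  have "(a + b) ^ 3 = a ^ 3 + b ^ 3 + 3 * (a * a * b + a * b * b)"
    by (simp add: power3_eq_cube algebra_simps)
  then show ?thesis using h by simp
qed

lemma cube_diff: "(3::'a::comm_ring_1) = 0 \<Longrightarrow> (a - b :: 'a) ^ 3 = a ^ 3 - b ^ 3"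
proof -
  assume h: "(3::'a) = 0"
  have "(a - b) ^ 3 = a ^ 3 - b ^ 3 - 3 * (a * a * b - a * b * b)"
    by (simp add: power3_eq_cube algebra_simps)
  then show ?thesis using h by simp
qed

lemma inv_unique: "(u :: 'a::comm_ring_1) * a = 1 \<Longrightarrow> u * b = 1 \<Longrightarrow> a = b"
  by (metis mult.commute mult.left_commute mult_1_right)

lemma Ge_cube:
  assumes h: "(3::'a::comm_ring_1) = 0" and m: "0 < m"
  shows "(Ge m :: 'a fps) ^ 3 = Ge (3 * m)"
proof (rule inv_unique)
  have h3: "(3::'a fps) = 0" by (rule fps_three[OF h])
  have "(1 - fps_X ^ m :: 'a fps) ^ 3 = 1 - fps_X ^ (3 * m)"
    using cube_diff[OF h3] by (simp add: power_mult[symmetric] mult.commute)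
  then show "(1 - fps_X ^ (3 * m)) * (Ge m :: 'a fps) ^ 3 = 1"
    by (metis Ge_inv[OF m] power_mult_distrib power_one)
  show "(1 - fps_X ^ (3 * m)) * (Ge (3 * m) :: 'a fps) = 1" by (rule Ge_inv) (use m in simp)
qed

lemma Op_cube:
  assumes h: "(3::'a::comm_ring_1) = 0" and m: "0 < m"
  shows "(Op m :: 'a fps) ^ 3 = Op (3 * m)"
proof -
  have h3: "(3::'a fps) = 0" by (rule fps_three[OF h])
  have "(1 + fps_X ^ m :: 'a fps) ^ 3 = 1 + fps_X ^ (3 * m)"
    using cube_add[OF h3] by (simp add: power_mult[symmetric] mult.commute)
  then show ?thesis unfolding Op_def power_mult_distrib Ge_cube[OF h m] by simp
qed

definition PiS :: "nat set \<Rightarrow> 'a::comm_ring_1 fps" where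
  "PiS S = (\<Prod>m\<in>S. Op m)"
definition WS :: "nat set \<Rightarrow> 'a::comm_ring_1 fps" where
  "WS S = (\<Prod>m\<in>S. Wp m)"

lemma PiS_WS: "0 \<notin> S \<Longrightarrow> PiS S * WS S = (1 :: 'a::comm_ring_1 fps)"
  unfolding PiS_def WS_def prod.distrib[symmetric]
  by (rule prod.neutral) (metis Op_Wp gr0I)

lemma PiS_cube:
  assumes h: "(3::'a::comm_ring_1) = 0" and S: "0 \<notin> S"
  shows "(PiS S :: 'a fps) ^ 3 = PiS ((\<lambda>m. 3 * m) ` S)"
proof -
  have "(PiS S :: 'a fps) ^ 3 = (\<Prod>m\<in>S. Op (3 * m))"
    unfolding PiS_def prod_power_distrib
    by (rule prod.cong[OF refl], rule Op_cube[OF h]) (use S in \<open>auto intro: gr0I\<close>)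
  also have "\<dots> = PiS ((\<lambda>m. 3 * m) ` S)"
    unfolding PiS_def by (subst prod.reindex) (auto simp: inj_on_def)
  finally show ?thesis .
qed

lemma PiS_trunc:
  assumes "finite S" "0 \<notin> S"
  shows "fcong (K+1) (PiS S :: 'a::comm_ring_1 fps) (PiS {x\<in>S. x \<le> K})"
proof -
  have s: "S \<inter> {x. x \<le> K} = {x\<in>S. x \<le> K}" by auto
  have e: "(\<Prod>m\<in>S. Op m :: 'a fps) = (\<Prod>m\<in>S \<inter> {x. x \<le> K}. Op m) * (\<Prod>m\<in>S - {x. x \<le> K}. Op m)"
    by (rule prod.Int_Diff) (rule assms)
  have e2: "(\<Prod>m\<in>S. Op m :: 'a fps) = (\<Prod>m\<in>{x\<in>S. x \<le> K}. Op m) * (\<Prod>m\<in>S - {x. x \<le> K}. Op m)"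
    using e unfolding s .
  have f: "fcong (K+1) (\<Prod>m\<in>S - {x. x \<le> K}. Op m :: 'a fps) 1"
    by (rule fcong_prod1) (use assms in \<open>auto intro!: fcong_Op\<close>)
  have "fcong (K+1) ((\<Prod>m\<in>{x\<in>S. x \<le> K}. Op m) * (\<Prod>m\<in>S - {x. x \<le> K}. Op m))
          ((\<Prod>m\<in>{x\<in>S. x \<le> K}. Op m) * (1 :: 'a fps))"
    by (rule fcong_mult[OF fcong_refl f])
  then show ?thesis unfolding PiS_def e2 by (simp only: mult_1_right)
qed

lemma alg1: "(a::'a::comm_ring_1) * a' = 1 \<Longrightarrow> b * b' = 1 \<Longrightarrow> (a * b^3) * (a'^3 * b') = a'^2 * b^2"
proof -
  assume h: "a * a' = 1" "b * b' = 1"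
  have "(a * b^3) * (a'^3 * b') = (a * a') * (b * b') * (a'^2 * b^2)"
    by (simp add: power2_eq_square power3_eq_cube ac_simps)
  then show ?thesis using h by simp
qed

lemma alg2: "(a::'a::comm_ring_1) * a' = 1 \<Longrightarrow> b * b' = 1 \<Longrightarrow> (c * a^3 * b) * (a'^3 * b') = c"
proof -
  assume h: "a * a' = 1" "b * b' = 1"
  have "(c * a^3 * b) * (a'^3 * b') = c * ((a * a') * (a * a') * (a * a') * (b * b'))"
    by (simp add: power2_eq_square power3_eq_cube ac_simps)
  then show ?thesis using h by simp
qed

lemma mod3_main:
  fixes K L :: nat
  assumes h: "(3::'a::comm_ring_1) = 0" and L: "coprime L (3::nat)" "0 < L"
  defines "U \<equiv> {1..K}"
  defines "A \<equiv> {m\<in>U. \<not> 3 dvd m \<and> \<not> L dvd m}"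
  defines "DL \<equiv> {m\<in>U. L dvd m}"
  shows "fcong (K+1) (PiS A :: 'a fps) (PiS DL ^ 2 * WS U ^ 2)"
proof -
  define D3 where "D3 = {m\<in>U. 3 dvd m}"
  define D3L where "D3L = {m\<in>U. 3 dvd m \<and> L dvd m}"
  have fin: "finite U" "finite A" "finite D3" "finite DL" "finite D3L"
    by (auto simp: U_def A_def D3_def DL_def D3L_def)
  have z: "0 \<notin> U" "0 \<notin> A" "0 \<notin> D3" "0 \<notin> DL" "0 \<notin> D3L"
    by (auto simp: U_def A_def D3_def DL_def D3L_def)
  have e1: "(PiS U :: 'a fps) * PiS D3L = PiS A * PiS D3 * PiS DL"
  proof -
    have "U = A \<union> (D3 \<union> DL)" "A \<inter> (D3 \<union> DL) = {}" "D3 \<inter> DL = D3L"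
      by (auto simp: U_def A_def D3_def DL_def D3L_def)
    moreover have "(PiS (D3 \<union> DL) :: 'a fps) * PiS (D3 \<inter> DL) = PiS D3 * PiS DL"
      unfolding PiS_def by (rule prod.union_inter) (use fin in auto)
    moreover have "(PiS (A \<union> (D3 \<union> DL)) :: 'a fps) = PiS A * PiS (D3 \<union> DL)"
      unfolding PiS_def by (rule prod.union_disjoint) (use fin calculation in auto)
    ultimately show ?thesis by (metis mult.assoc)
  qed
  have c1: "fcong (K+1) ((PiS U :: 'a fps) ^ 3) (PiS D3)"
  proof -
    have "{x \<in> (\<lambda>m. 3 * m) ` U. x \<le> K} = D3"
      by (auto simp: U_def D3_def image_iff elim!: dvdE)
    moreover have "fcong (K+1) (PiS ((\<lambda>m. 3 * m) ` U) :: 'a fps) (PiS {x \<in> (\<lambda>m. 3 * m) ` U. x \<le> K})"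
      by (rule PiS_trunc) (use fin z in auto)
    ultimately show ?thesis using PiS_cube[OF h z(1)] by simp
  qed
  have c2: "fcong (K+1) ((PiS DL :: 'a fps) ^ 3) (PiS D3L)"
  proof -
    have "{x \<in> (\<lambda>m. 3 * m) ` DL. x \<le> K} = D3L"
    proof (rule set_eqI iffI)+
      fix x assume "x \<in> {x \<in> (\<lambda>m. 3 * m) ` DL. x \<le> K}"
      then show "x \<in> D3L" by (auto simp: DL_def D3L_def U_def)
    next
      fix x assume x: "x \<in> D3L"
      then obtain y where y: "x = 3 * y" by (auto simp: D3L_def elim!: dvdE)
      have "L dvd 3 * y" using x y by (simp add: D3L_def)
      then have "L dvd y" using L(1) by (simp add: coprime_dvd_mult_right_iff)
      then show "x \<in> {x \<in> (\<lambda>m. 3 * m) ` DL. x \<le> K}"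
        using x y by (auto simp: D3L_def DL_def U_def image_iff)
    qed
    moreover have "fcong (K+1) (PiS ((\<lambda>m. 3 * m) ` DL) :: 'a fps) (PiS {x \<in> (\<lambda>m. 3 * m) ` DL. x \<le> K})"
      by (rule PiS_trunc) (use fin z in auto)
    ultimately show ?thesis using PiS_cube[OF h z(4)] by simp
  qed
  have "fcong (K+1) ((PiS U :: 'a fps) * PiS DL ^ 3) (PiS U * PiS D3L)"
    by (rule fcong_mult[OF fcong_refl c2])
  also have "PiS U * PiS D3L = (PiS A * PiS D3 * PiS DL :: 'a fps)" by (rule e1)
  also have "fcong (K+1) \<dots> (PiS A * PiS U ^ 3 * PiS DL)"
    by (rule fcong_mult[OF fcong_mult[OF fcong_refl fcong_sym[OF c1]] fcong_refl])
  finally have c3: "fcong (K+1) ((PiS U :: 'a fps) * PiS DL ^ 3) (PiS A * PiS U ^ 3 * PiS DL)" .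
  have c4: "fcong (K+1) (((PiS U :: 'a fps) * PiS DL ^ 3) * (WS U ^ 3 * WS DL)) ((PiS A * PiS U ^ 3 * PiS DL) * (WS U ^ 3 * WS DL))"
    by (rule fcong_mult[OF c3 fcong_refl])
  have i1: "(PiS U :: 'a fps) * WS U = 1" by (rule PiS_WS[OF z(1)])
  have i2: "(PiS DL :: 'a fps) * WS DL = 1" by (rule PiS_WS[OF z(4)])
  have "fcong (K+1) (WS U ^ 2 * PiS DL ^ 2) (PiS A :: 'a fps)"
    using c4 unfolding alg1[OF i1 i2] alg2[OF i1 i2] .
  then show ?thesis by (simp add: fcong_sym mult.commute)
qed


lemma prod_1_to: "(\<Prod>n\<in>{1..k}. f n) = (\<Prod>n<k. f (Suc n) :: 'a::comm_monoid_mult)"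
  by (induction k) (simp_all add: mult.commute)

lemma prod_split_eo: "(\<Prod>n<2*m. f (Suc n)) = (\<Prod>j<m. f (2*j+1)) * (\<Prod>j<m. f (2*j+2) :: 'a::comm_monoid_mult)"
proof (induction m)
  case (Suc m)
  have "(\<Prod>n<2*Suc m. f (Suc n)) = (\<Prod>n<2*m. f (Suc n)) * f (2*m+1) * f (2*m+2)"
    by (simp add: mult.assoc)
  then show ?case using Suc by (simp add: ac_simps)
qed simp

lemma WS_eq: "(WS {1..2*m} :: 'a::comm_ring_1 fps) = Od fps_X m ^ 2 * Em m * (Em m * Pk (2*m))"
proof -
  have "(WS {1..2*m} :: 'a fps) = (\<Prod>j<m. Wp (2*j+1)) * (\<Prod>j<m. Wp (2*j+2))"
    unfolding WS_def prod_1_to prod_split_eo ..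
  also have "(\<Prod>j<m. Wp (2*j+1) :: 'a fps) = Od fps_X m ^ 2 * (\<Prod>j<m. Ge (2*(2*j+1)))"
    unfolding Wp_def Od_def prod.distrib prod_power_distrib ..
  also have "(\<Prod>j<m. Wp (2*j+2) :: 'a fps) = Em m ^ 2 * (\<Prod>j<m. Ge (2*(2*j+2)))"
    unfolding Wp_def Em_def prod.distrib prod_power_distrib by (simp add: algebra_simps)
  also have "(Pk (2*m) :: 'a fps) = (\<Prod>j<m. Ge (2*(2*j+1))) * (\<Prod>j<m. Ge (2*(2*j+2)))"
    unfolding Pk_def using prod_split_eo[where m=m and f="\<lambda>n. Ge (2*n)"] by simp
  ultimately show ?thesis by (simp add: power2_eq_square ac_simps)
qed

lemma WS_Theta:
  assumes "1 \<le> m"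
  shows "fcong (2*m+1) (WS {1..2*m} :: 'a::comm_ring_1 fps) (Theta m)"
proof -
  have b: "fcong (2*(min (2*m) m + 1)) (Pk (2*m) * Em m :: 'a fps) 1" by (rule PE)
  have "fcong (2*m+1) (Pk (2*m) * Em m :: 'a fps) 1" by (rule fcong_mono[OF _ b]) simp
  then have a: "fcong (2*m+1) (Em m * Pk (2*m) :: 'a fps) 1" by (simp only: mult.commute)
  then have "fcong (2*m+1) (Od fps_X m ^ 2 * Em m * (Em m * Pk (2*m)) :: 'a fps) (Od fps_X m ^ 2 * Em m * 1)"
    by (rule fcong_mult[OF fcong_refl])
  then have "fcong (2*m+1) (WS {1..2*m} :: 'a fps) (Od fps_X m ^ 2 * Em m)"
    unfolding WS_eq by simp
  also have "fcong (2*m+1) (Od fps_X m ^ 2 * Em m :: 'a fps) (Theta m)" by (rule gauss_fcong[OF assms])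
  finally show ?thesis .
qed

lemma nth_mult_nz:
  assumes "fps_nth (f * g) n \<noteq> (0::'a::comm_ring_1)"
  shows "\<exists>i\<le>n. fps_nth f i \<noteq> 0 \<and> fps_nth g (n - i) \<noteq> 0"
proof (rule ccontr)
  assume "\<not> ?thesis"
  then have "(\<Sum>i=0..n. fps_nth f i * fps_nth g (n - i)) = 0"
    by (intro sum.neutral) auto
  then show False using assms by (simp add: fps_mult_nth)
qed

lemma neg1_pow_nth: "fps_nth ((-1 :: 'a::comm_ring_1 fps) ^ j) n = (if n = 0 then (-1)^j else 0)"
  by (induction j) (auto simp: fps_one_nth)

lemma Theta_supp:
  assumes "fps_nth (Theta m :: 'a::comm_ring_1 fps) a \<noteq> 0"
  shows "\<exists>x. a = x^2"
proof (rule ccontr)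
  assume na: "\<not> ?thesis"
  have "fps_nth ((-1)^(k+m) * fps_X^(dd k m ^ 2) :: 'a fps) a = 0" for k
  proof -
    have "fps_nth ((-1)^(k+m) * fps_X^(dd k m ^ 2) :: 'a fps) a = fps_nth (fps_X^(dd k m ^ 2) * (-1)^(k+m) :: 'a fps) a"
      by (simp only: mult.commute)
    also have "\<dots> = 0" using na by (auto simp: fps_X_power_mult_nth neg1_pow_nth)
    finally show ?thesis .
  qed
  then show False using assms by (simp add: Theta_def fps_sum_nth)
qed

lemma Theta2_supp:
  assumes "fps_nth (Theta m ^ 2 :: 'a::comm_ring_1 fps) a \<noteq> 0"
  shows "\<exists>x y. a = x^2 + y^2"
proof -
  from nth_mult_nz[of "Theta m" "Theta m" a] assms obtain i where
    "i \<le> a" "fps_nth (Theta m :: 'a fps) i \<noteq> 0" "fps_nth (Theta m :: 'a fps) (a - i) \<noteq> 0"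
    by (auto simp: power2_eq_square)
  then obtain x y where "i = x^2" "a - i = y^2" using Theta_supp by metis
  then show ?thesis using \<open>i \<le> a\<close> by (metis le_add_diff_inverse)
qed

definition suppd :: "nat \<Rightarrow> 'a::comm_ring_1 fps \<Rightarrow> bool" where
  "suppd L f \<longleftrightarrow> (\<forall>i. fps_nth f i \<noteq> 0 \<longrightarrow> L dvd i)"

lemma suppd_1: "suppd L (1 :: 'a::comm_ring_1 fps)"
  by (simp add: suppd_def fps_one_nth)

lemma suppd_mult: "suppd L f \<Longrightarrow> suppd L g \<Longrightarrow> suppd L (f * g :: 'a::comm_ring_1 fps)"
  unfolding suppd_def
proof (intro allI impI)
  fix i assume f: "\<forall>i. fps_nth f i \<noteq> 0 \<longrightarrow> L dvd i" and g: "\<forall>i. fps_nth g i \<noteq> 0 \<longrightarrow> L dvd i"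
    and "fps_nth (f * g) i \<noteq> 0"
  then obtain j where "j \<le> i" "fps_nth f j \<noteq> 0" "fps_nth g (i - j) \<noteq> 0" using nth_mult_nz by blast
  then have "L dvd j" "L dvd (i - j)" using f g by auto
  then show "L dvd i" using \<open>j \<le> i\<close> by (metis dvd_add le_add_diff_inverse)
qed

lemma suppd_prod: "finite S \<Longrightarrow> (\<And>x. x \<in> S \<Longrightarrow> suppd L (f x)) \<Longrightarrow> suppd L (prod f S :: 'a::comm_ring_1 fps)"
  by (induction S rule: finite_induct) (auto intro: suppd_mult suppd_1)

lemma suppd_Op: "0 < m \<Longrightarrow> L dvd m \<Longrightarrow> suppd L (Op m :: 'a::comm_ring_1 fps)"
  unfolding suppd_def by (auto simp: Op_nth intro: dvd_trans split: if_splits)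

lemma mod3_vanish:
  fixes L N :: nat
  assumes h: "(3::'a::comm_ring_1) = 0" and L: "coprime L (3::nat)" "0 < L" and N: "1 \<le> N"
    and nt: "\<And>i x y. i \<le> N \<Longrightarrow> L dvd i \<Longrightarrow> N - i \<noteq> x^2 + y^2"
  shows "fps_nth (PiS {m\<in>{1..2*N}. \<not> 3 dvd m \<and> \<not> L dvd m} :: 'a fps) N = 0"
proof -
  define DL where "DL = {m\<in>{1..2*N}. L dvd m}"
  have c1: "fcong (2*N+1) (PiS {m\<in>{1..2*N}. \<not> 3 dvd m \<and> \<not> L dvd m} :: 'a fps) (PiS DL ^ 2 * WS {1..2*N} ^ 2)"
    using mod3_main[OF h L, of "2*N"] unfolding DL_def by simp
  have c2: "fcong (2*N+1) (PiS DL ^ 2 * WS {1..2*N} ^ 2 :: 'a fps) (PiS DL ^ 2 * Theta N ^ 2)"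
    by (rule fcong_mult[OF fcong_refl fcong_power[OF WS_Theta[OF N]]])
  have e: "fps_nth (PiS {m\<in>{1..2*N}. \<not> 3 dvd m \<and> \<not> L dvd m} :: 'a fps) N = fps_nth (PiS DL ^ 2 * Theta N ^ 2 :: 'a fps) N"
    by (rule fcong_nth[OF fcong_trans[OF c1 c2]]) simp
  have sD: "suppd L (PiS DL ^ 2 :: 'a fps)"
    unfolding PiS_def power2_eq_square
    by (intro suppd_mult suppd_prod suppd_Op) (auto simp: DL_def)
  show ?thesis
  proof (rule ccontr)
    assume "fps_nth (PiS {m\<in>{1..2*N}. \<not> 3 dvd m \<and> \<not> L dvd m} :: 'a fps) N \<noteq> 0"
    then have "fps_nth (PiS DL ^ 2 * Theta N ^ 2 :: 'a fps) N \<noteq> 0" using e by simp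
    then obtain i where i: "i \<le> N" "fps_nth (PiS DL ^ 2 :: 'a fps) i \<noteq> 0" "fps_nth (Theta N ^ 2 :: 'a fps) (N - i) \<noteq> 0"
      using nth_mult_nz by blast
    have "L dvd i" using sD i(2) by (simp add: suppd_def)
    moreover obtain x y where "N - i = x^2 + y^2" using Theta2_supp[OF i(3)] by blast
    ultimately show False using nt i(1) by blast
  qed
qed



lemma fps_four: "(4::'a::comm_ring_1) = 0 \<Longrightarrow> (4::'a fps) = 0"
  by (metis fps_const_0_eq_0 numeral_fps_const)

lemma prod_1_2:
  assumes h: "(4::'b::comm_ring_1) = 0" and "finite S"
  shows "(\<Prod>m\<in>S. 1 + 2 * Y m) = 1 + 2 * (\<Sum>m\<in>S. Y m :: 'b)"
  using assms(2)
proof (induction S rule: finite_induct)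
  case (insert x F)
  have "(1 + 2 * Y x) * (1 + 2 * (\<Sum>m\<in>F. Y m)) = 1 + 2 * (Y x + (\<Sum>m\<in>F. Y m)) + 4 * (Y x * (\<Sum>m\<in>F. Y m))"
    by (simp add: algebra_simps)
  then show ?case using insert h by simp
qed simp

lemma XGe_nth: "0 < m \<Longrightarrow> 0 < N \<Longrightarrow> fps_nth (fps_X ^ m * Ge m :: 'a::comm_ring_1 fps) N = (if m dvd N then 1 else 0)"
proof -
  assume m: "0 < m" and N: "0 < N"
  show ?thesis
  proof (cases "N < m")
    case True
    then have "\<not> m dvd N" using N by (auto dest: dvd_imp_le)
    then show ?thesis using True by (simp add: fps_X_power_mult_nth)
  next
    case False
    then have "m dvd (N - m) \<longleftrightarrow> m dvd N" by (simp add: dvd_minus_self)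
    then show ?thesis using False by (simp add: fps_X_power_mult_nth Ge_nth)
  qed
qed

lemma Op_eq2: "0 < m \<Longrightarrow> (Op m :: 'a::comm_ring_1 fps) = 1 + 2 * (fps_X ^ m * Ge m)"
proof -
  assume m: "0 < m"
  have "(2::'a fps) * (fps_X ^ m * Ge m) = fps_X ^ m * Ge m + fps_X ^ m * Ge m" by (rule mult_2)
  then show ?thesis by (simp only: Op_eq[OF m] add.assoc)
qed

lemma sum_ind: "finite S \<Longrightarrow> (\<Sum>m\<in>S. if P m then 1 else 0) = (of_nat (card {m\<in>S. P m}) :: 'a::comm_ring_1)"
proof -
  assume S: "finite S"
  have "(\<Sum>m\<in>S. if P m then 1 else 0) = (\<Sum>m\<in>{m\<in>S. P m}. 1 :: 'a)" by (rule sum.inter_filter[symmetric]) (rule S)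
  also have "\<dots> = of_nat (card {m\<in>S. P m})" by simp
  finally show ?thesis .
qed

lemma mod4_coeff:
  assumes h: "(4::'a::comm_ring_1) = 0" and S: "finite S" "0 \<notin> S" and N: "0 < N"
  shows "fps_nth (PiS S :: 'a fps) N = 2 * of_nat (card {m\<in>S. m dvd N})"
proof -
  have h4: "(4::'a fps) = 0" by (rule fps_four[OF h])
  have "(PiS S :: 'a fps) = (\<Prod>m\<in>S. 1 + 2 * (fps_X ^ m * Ge m))"
    unfolding PiS_def
  proof (rule prod.cong[OF refl])
    fix m assume "m \<in> S"
    then have "0 < m" using S by (auto intro: gr0I)
    then show "(Op m :: 'a fps) = 1 + 2 * (fps_X ^ m * Ge m)" by (rule Op_eq2)
  qed
  also have "\<dots> = 1 + 2 * (\<Sum>m\<in>S. fps_X ^ m * Ge m)" by (rule prod_1_2[OF h4 S(1)])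
  finally have e: "(PiS S :: 'a fps) = 1 + 2 * (\<Sum>m\<in>S. fps_X ^ m * Ge m)" .
  have "fps_nth (\<Sum>m\<in>S. fps_X ^ m * Ge m :: 'a fps) N = (\<Sum>m\<in>S. if m dvd N then 1 else 0)"
    unfolding fps_sum_nth
  proof (rule sum.cong[OF refl])
    fix m assume "m \<in> S"
    then have "0 < m" using S by (auto intro: gr0I)
    then show "fps_nth (fps_X ^ m * Ge m :: 'a fps) N = (if m dvd N then 1 else 0)" by (rule XGe_nth[OF _ N])
  qed
  also have "\<dots> = of_nat (card {m\<in>S. m dvd N})" by (rule sum_ind[OF S(1)])
  finally have s: "fps_nth (\<Sum>m\<in>S. fps_X ^ m * Ge m :: 'a fps) N = of_nat (card {m\<in>S. m dvd N})" .
  have "fps_nth (PiS S :: 'a fps) N = fps_nth (1 :: 'a fps) N + fps_nth (2 * (\<Sum>m\<in>S. fps_X ^ m * Ge m) :: 'a fps) N"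
    unfolding e by (rule fps_add_nth)
  also have "fps_nth (1 :: 'a fps) N = 0" using N by (simp add: fps_one_nth)
  also have "fps_nth (2 * (\<Sum>m\<in>S. fps_X ^ m * Ge m) :: 'a fps) N = 2 * fps_nth (\<Sum>m\<in>S. fps_X ^ m * Ge m :: 'a fps) N"
    by (simp only: mult_2 fps_add_nth)
  finally show ?thesis unfolding s by simp
qed


lemma mset_le_sum: "x \<in># M \<Longrightarrow> x \<le> sum_mset (M :: nat multiset)"
proof -
  assume "x \<in># M"
  then obtain M' where "M = add_mset x M'" by (metis multi_member_split)
  then show ?thesis by simp
qed

lemma bireg_eq:
  assumes "N \<le> K"
  shows "biregular_overpartitions L 3 N = OV {m\<in>{1..K}. \<not> 3 dvd m \<and> \<not> L dvd m} N"
proof (rule set_eqI)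
  fix z :: "nat multiset \<times> nat set"
  obtain M S where z: "z = (M, S)" by fastforce
  have "z \<in> biregular_overpartitions L 3 N \<longleftrightarrow>
        (\<forall>x\<in>#M. 0 < x) \<and> sum_mset M = N \<and> S \<subseteq> set_mset M \<and> (\<forall>x\<in>#M. \<not> L dvd x \<and> \<not> 3 dvd x)"
    unfolding z biregular_overpartitions_def overpartitions_def by auto
  also have "\<dots> \<longleftrightarrow> set_mset M \<subseteq> {m\<in>{1..K}. \<not> 3 dvd m \<and> \<not> L dvd m} \<and> sum_mset M = N \<and> S \<subseteq> set_mset M"
  proof
    assume a: "(\<forall>x\<in>#M. 0 < x) \<and> sum_mset M = N \<and> S \<subseteq> set_mset M \<and> (\<forall>x\<in>#M. \<not> L dvd x \<and> \<not> 3 dvd x)"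
    have "x \<in># M \<Longrightarrow> x \<le> K" for x using mset_le_sum[of x M] a assms by simp
    then show "set_mset M \<subseteq> {m\<in>{1..K}. \<not> 3 dvd m \<and> \<not> L dvd m} \<and> sum_mset M = N \<and> S \<subseteq> set_mset M"
      using a by (auto simp: Suc_le_eq)
  next
    assume "set_mset M \<subseteq> {m\<in>{1..K}. \<not> 3 dvd m \<and> \<not> L dvd m} \<and> sum_mset M = N \<and> S \<subseteq> set_mset M"
    then show "(\<forall>x\<in>#M. 0 < x) \<and> sum_mset M = N \<and> S \<subseteq> set_mset M \<and> (\<forall>x\<in>#M. \<not> L dvd x \<and> \<not> 3 dvd x)"
      by auto
  qed
  also have "\<dots> \<longleftrightarrow> z \<in> OV {m\<in>{1..K}. \<not> 3 dvd m \<and> \<not> L dvd m} N"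
    unfolding z OV_def by simp
  finally show "z \<in> biregular_overpartitions L 3 N \<longleftrightarrow> z \<in> OV {m\<in>{1..K}. \<not> 3 dvd m \<and> \<not> L dvd m} N" .
qed

lemma Bbar_coeff:
  assumes "N \<le> K"
  shows "(of_nat (Bbar L 3 N) :: 'a::comm_ring_1) = fps_nth (PiS {m\<in>{1..K}. \<not> 3 dvd m \<and> \<not> L dvd m} :: 'a fps) N"
proof -
  have "finite {m\<in>{1..K}. \<not> 3 dvd m \<and> \<not> L dvd m}" "0 \<notin> {m\<in>{1..K}. \<not> 3 dvd m \<and> \<not> L dvd m}" by auto
  then have c: "fps_nth (\<Prod>m\<in>{m\<in>{1..K}. \<not> 3 dvd m \<and> \<not> L dvd m}. Op m :: 'a fps) N
      = of_nat (card (OV {m\<in>{1..K}. \<not> 3 dvd m \<and> \<not> L dvd m} N))"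
    using count_main by blast
  show ?thesis unfolding Bbar_def bireg_eq[OF assms] PiS_def by (rule c[symmetric])
qed

lemma coprime_pow2_3: "coprime ((2::nat)^a) 3"
proof -
  have "coprime (2::nat) 3" by (rule coprime3) simp
  then show ?thesis by (simp add: coprime_power_left_iff)
qed

lemma B3:
  assumes "2*k+1 < \<alpha>"
  shows "3 dvd Bbar (2^\<alpha>) 3 (4^k*(4*n+3))"
proof -
  define N where "N = 4^k*(4*n+3)"
  have N1: "1 \<le> N" unfolding N_def by simp
  have nt: "N - i \<noteq> x^2 + y^2" if i: "i \<le> N" "2^\<alpha> dvd i" for i x y
  proof -
    obtain n' where "N - i = 4^k*(4*n'+3)" using closure4[OF assms i(2)] i(1) unfolding N_def by blast
    then show ?thesis using nsq by metis
  qed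
  have "(of_nat (Bbar (2^\<alpha>) 3 N) :: 3) = fps_nth (PiS {m\<in>{1..2*N}. \<not> 3 dvd m \<and> \<not> 2^\<alpha> dvd m} :: 3 fps) N"
    by (rule Bbar_coeff) simp
  also have "\<dots> = 0"
    by (rule mod3_vanish[OF _ coprime_pow2_3 _ N1 nt]) simp_all
  finally have "(of_nat (Bbar (2^\<alpha>) 3 N) :: 3) = 0" .
  then show ?thesis unfolding N_def by (simp add: of_nat_eq_0_iff_char_dvd)
qed

lemma B4:
  assumes "0 < N"
  shows "[Bbar L 3 N = 2 * card {m\<in>{m\<in>{1..N}. \<not> 3 dvd m \<and> \<not> L dvd m}. m dvd N}] (mod 4)"
proof -
  have "(of_nat (Bbar L 3 N) :: 4) = fps_nth (PiS {m\<in>{1..N}. \<not> 3 dvd m \<and> \<not> L dvd m} :: 4 fps) N"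
    by (rule Bbar_coeff) simp
  also have "\<dots> = 2 * of_nat (card {m\<in>{m\<in>{1..N}. \<not> 3 dvd m \<and> \<not> L dvd m}. m dvd N})"
    by (rule mod4_coeff) (use assms in auto)
  also have "\<dots> = of_nat (2 * card {m\<in>{m\<in>{1..N}. \<not> 3 dvd m \<and> \<not> L dvd m}. m dvd N})" by simp
  finally show ?thesis by (simp only: of_nat_eq_iff_cong_CHAR) simp
qed

lemma even_of_cong4: "[b = 2 * c] (mod 4) \<Longrightarrow> even (b::nat)"
  unfolding cong_def by presburger

lemma four_of_cong4: "[b = 2 * c] (mod 4) \<Longrightarrow> even c \<Longrightarrow> 4 dvd (b::nat)"
  unfolding cong_def by presburger

theorem theorem2:
  shows "(\<forall>n k \<alpha> :: nat. \<alpha> > 2 * k + 1 \<longrightarrow>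
            [Bbar (2 ^ \<alpha>) 3 (4 ^ k * (4 * n + 3)) = 0] (mod 6))
       \<and> (\<forall>n \<alpha> :: nat. \<alpha> > 2 \<longrightarrow> [Bbar (2 ^ \<alpha>) 3 (8 * n + 7) = 0] (mod 12))"
proof (intro conjI allI impI)
  fix n k \<alpha> :: nat assume a: "\<alpha> > 2 * k + 1"
  have 3: "3 dvd Bbar (2^\<alpha>) 3 (4^k*(4*n+3))" by (rule B3[OF a])
  have "even (Bbar (2^\<alpha>) 3 (4^k*(4*n+3)))" by (rule even_of_cong4[OF B4]) simp
  with 3 have "6 dvd Bbar (2^\<alpha>) 3 (4^k*(4*n+3))" by presburger
  then show "[Bbar (2 ^ \<alpha>) 3 (4 ^ k * (4 * n + 3)) = 0] (mod 6)" by (simp add: cong_0_iff)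
next
  fix n \<alpha> :: nat assume a: "\<alpha> > 2"
  define N where "N = 8 * n + 7"
  have N: "N = 4^0 * (4 * (2*n+1) + 3)" unfolding N_def by simp
  have 3: "3 dvd Bbar (2^\<alpha>) 3 N" unfolding N by (rule B3) (use a in simp)
  have c: "{m\<in>{m\<in>{1..N}. \<not> 3 dvd m \<and> \<not> 2^\<alpha> dvd m}. m dvd N} = {m. m dvd N \<and> \<not> 3 dvd m}"
  proof (rule set_eqI iffI)+
    fix m assume "m \<in> {m. m dvd N \<and> \<not> 3 dvd m}"
    then have m: "m dvd N" "\<not> 3 dvd m" by auto
    have "0 < N" unfolding N_def by simp
    then have "1 \<le> m" "m \<le> N" using m(1) by (auto intro: dvd_imp_le simp: Suc_le_eq intro!: gr0I)
    moreover have "\<not> 2^\<alpha> dvd m"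
    proof
      assume "2^\<alpha> dvd m"
      moreover have "(2::nat) dvd 2^\<alpha>" using a by (simp add: dvd_power)
      ultimately have "2 dvd N" using m(1) by (meson dvd_trans)
      then show False unfolding N_def by presburger
    qed
    ultimately show "m \<in> {m\<in>{m\<in>{1..N}. \<not> 3 dvd m \<and> \<not> 2^\<alpha> dvd m}. m dvd N}" using m by auto
  qed auto
  have ev: "even (card {m. m dvd N \<and> \<not> 3 dvd m})"
    by (rule even_card_nd3) (simp add: N_def)
  have "4 dvd Bbar (2^\<alpha>) 3 N"
    by (rule four_of_cong4[OF B4]) (use ev c in \<open>simp_all add: N_def\<close>)
  with 3 have "12 dvd Bbar (2^\<alpha>) 3 N" by presburger
  then show "[Bbar (2 ^ \<alpha>) 3 (8 * n + 7) = 0] (mod 12)" by (simp add: cong_0_iff N_def)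
qed


end
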